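(* Let $\tau_i\in\tau_H$ be a HI-task in the multi-rate fluid model with earliest completion window $k_i$, and suppose $$\sum_{j:1\le j<k_i}\theta_{i,j}^H w_j\ \ge\ u_i^H\sum_{j:1\le j<k_i}w_j \qquad\text{and}\qquad \forall j:\ 1\le j<k_i,\ \ \theta_{i,j}^H\le\theta_{i,j+1}^H .$$ Then for every time instant $t$ (measured from the mode switch) with $0\le t\le \sum_{j:1\le j<k_i}w_j$, the total execution assigned to $\tau_i$ in the interval $[t,\sum_{j:1\le j<k_i}w_j]$ (i.e., the integral over this interval of $\tau_i$'s piecewise-constant transition rate, which equals $\theta_{i,j}^H$ on window $j$) is at least $\big(\sum_{j:1\le j<k_i}w_j-t\big)\,u_i^H$.
   Context: Dual-criticality implicit-deadline sporadic tasks: task $\tau_i$ has period/relative deadline $T_i>0$, WCETs $C_i^L\le C_i^H$, $u_i^H=C_i^H/T_i\le1$; $n_H$ is the number of HI-tasks. Multi-rate fluid model: in LO-mode each job of $\tau_i$ executes at rate $\theta_i^L\in(0,1]$; after the mode switch (time $0$), the transition period $[0,\sum_{j=1}^{n_H}w_j)$ is divided into consecutive windows of durations $w_1,\dots,w_{n_H}\ge0$, window $j$ being $[\sum_{l<j}w_l,\sum_{l\le j}w_l)$, in which HI-task $\tau_i$ executes at rate $\theta_{i,j}^H\in[0,1]$; afterwards it executes at rate $\theta_i^H$. By convention $\theta_{i,n_H+1}^H$ denotes $\theta_i^H$. The earliest completion window of $\tau_i$ is the largest index $k_i\in\{1,\dots,n_H+1\}$ with $\sum_{j:1\le j<k_i}w_j<T_i-C_i^L/\theta_i^L$.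 *)

theory Defs
  imports "HOL-Analysis.Analysis"
begin

text \<open>Windows are indexed 1..nH; w j is the duration of window j.
  Window j is the interval [sum_{l<j} w l, sum_{l<=j} w l).\<close>

definition window :: "(nat \<Rightarrow> real) \<Rightarrow> nat \<Rightarrow> real set" where
  "window w j = {(\<Sum>l\<in>{1..<j}. w l) ..< (\<Sum>l\<in>{1..j}. w l)}"

text \<open>Piecewise-constant transition rate of a HI-task after the mode switch (time 0):
  theta j on window j (1 <= j <= nH), and theta (nH+1) (= the HI-mode rate) afterwards.\<close>

definition trans_rate :: "nat \<Rightarrow> (nat \<Rightarrow> real) \<Rightarrow> (nat \<Rightarrow> real) \<Rightarrow> real \<Rightarrow> real" where
  "trans_rate nH w theta t =
     (if \<exists>j\<in>{1..nH}. t \<in> window w j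
      then theta (THE j. j \<in> {1..nH} \<and> t \<in> window w j)
      else theta (nH + 1))"

definition earliest_completion_window ::
  "nat \<Rightarrow> (nat \<Rightarrow> real) \<Rightarrow> real \<Rightarrow> real \<Rightarrow> real \<Rightarrow> nat \<Rightarrow> bool" where
  "earliest_completion_window nH w T CL thetaL k \<longleftrightarrow>
     k \<in> {1..nH+1} \<and> (\<Sum>j\<in>{1..<k}. w j) < T - CL / thetaL \<and>
     (\<forall>k'\<in>{1..nH+1}. (\<Sum>j\<in>{1..<k'}. w j) < T - CL / thetaL \<longrightarrow> k' \<le> k)"

end

theory Submission
  imports Defs
begin

theorem lemma1:
  fixes nH k :: nat and w theta :: "nat \<Rightarrow> real"
    and T CL CH thetaL t :: real
  assumes HI: "nH \<ge> 1"
    and T_pos: "T > 0"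
    and C_ge: "0 \<le> CL" "CL \<le> CH"
    and uH_le: "CH / T \<le> 1"
    and thetaL: "0 < thetaL" "thetaL \<le> 1"
    and theta_range: "\<And>j. j \<in> {1..nH+1} \<Longrightarrow> 0 \<le> theta j \<and> theta j \<le> 1"
    and w_nonneg: "\<And>j. j \<in> {1..nH} \<Longrightarrow> w j \<ge> 0"
    and k: "earliest_completion_window nH w T CL thetaL k"
    and sum_cond: "(\<Sum>j\<in>{1..<k}. theta j * w j) \<ge> (CH / T) * (\<Sum>j\<in>{1..<k}. w j)"
    and mono: "\<And>j. 1 \<le> j \<Longrightarrow> j < k \<Longrightarrow> theta j \<le> theta (j + 1)"
    and t: "0 \<le> t" "t \<le> (\<Sum>j\<in>{1..<k}. w j)"
  shows "trans_rate nH w theta integrable_on {t..(\<Sum>j\<in>{1..<k}. w j)} \<and>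
         integral {t..(\<Sum>j\<in>{1..<k}. w j)} (trans_rate nH w theta)
           \<ge> ((\<Sum>j\<in>{1..<k}. w j) - t) * (CH / T)"
proof -
  define P where "P j = (\<Sum>l\<in>{1..<j}. w l)" for j
  define f where "f = trans_rate nH w theta"
  define W where "W = P k"
  define u where "u = CH / T"
  have kr: "1 \<le> k" "k \<le> nH + 1" using k unfolding earliest_completion_window_def by auto
  have Pmono: "P a \<le> P b" if "a \<le> b" "b \<le> nH+1" for a b
    unfolding P_def
  proof (rule sum_mono2)
    show "\<And>x. x \<in> {1..<b} - {1..<a} \<Longrightarrow> 0 \<le> w x"
      using that w_nonneg by auto
  qed (use that in auto)
  have Psuc: "P (Suc j) = P j + w j" if "j \<ge> 1" for j
    unfolding P_def using that by (simp add: sum.atLeastLessThan_Suc)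
  have P01: "P 0 = 0" "P 1 = 0" unfolding P_def by auto
  have window_eq: "window w j = {P j..<P (Suc j)}" for j
    unfolding window_def P_def by (simp add: atLeastLessThanSuc_atLeastAtMost)
  have uniq: "j = j'" if "j\<in>{1..nH}" "j'\<in>{1..nH}" "s \<in> window w j" "s \<in> window w j'" for j j' s
  proof (rule ccontr)
    assume "j \<noteq> j'"
    then consider "j < j'" | "j' < j" by linarith
    then show False
    proof cases
      case 1
      then have "P (Suc j) \<le> P j'" using Pmono[of "Suc j" j'] that by auto
      then show False using that unfolding window_eq by auto
    next
      case 2
      then have "P (Suc j') \<le> P j" using Pmono[of "Suc j'" j] that by auto
      then show False using that unfolding window_eq by auto
    qed
  qed
  have rate: "f s = theta j" if "j\<in>{1..nH}" "s \<in> window w j" for j s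
  proof -
    have "(THE j. j \<in> {1..nH} \<and> s \<in> window w j) = j"
      using that uniq by (intro the_equality) auto
    then show ?thesis unfolding f_def trans_rate_def using that by auto
  qed
  define idx where "idx s = (LEAST j. s < P (Suc j))" for s
  have idx_props: "1 \<le> idx s \<and> idx s < k \<and> f s = theta (idx s)" if "0 \<le> s" "s < W" for s
  proof -
    have ex: "s < P (Suc (k - 1))" using that kr unfolding W_def by simp
    have a: "s < P (Suc (idx s))" unfolding idx_def by (rule LeastI[of "\<lambda>j. s < P (Suc j)", OF ex])
    have b: "idx s \<le> k - 1" unfolding idx_def by (rule Least_le[of "\<lambda>j. s < P (Suc j)", OF ex])
    have c: "idx s \<noteq> 0"
    proof
      assume "idx s = 0"
      then show False using a P01 that by simp
    qed
    then obtain i where i: "idx s = Suc i" by (cases "idx s") auto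
    have "\<not> s < P (Suc i)" unfolding idx_def
      by (rule not_less_Least) (use i in \<open>simp add: idx_def\<close>)
    then have "s \<in> window w (idx s)" using a i unfolding window_eq by auto
    moreover have "idx s \<in> {1..nH}" using b c kr by auto
    ultimately show ?thesis using rate b c kr by auto
  qed
  have idx_mono: "idx s1 \<le> idx s2" if "s1 \<le> s2" "0 \<le> s1" "s2 < W" for s1 s2
  proof -
    have ex: "s2 < P (Suc (k - 1))" using that kr unfolding W_def by simp
    have a: "s2 < P (Suc (idx s2))" unfolding idx_def by (rule LeastI[of "\<lambda>j. s2 < P (Suc j)", OF ex])
    then have "s1 < P (Suc (idx s2))" using that by auto
    then show ?thesis unfolding idx_def[of s1] by (rule Least_le)
  qed
  have theta_mono: "\<forall>a. 1 \<le> a \<longrightarrow> a \<le> b \<longrightarrow> b < k \<longrightarrow> theta a \<le> theta b" for b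
  proof (induction b)
    case 0 then show ?case by auto
  next
    case (Suc b)
    show ?case
    proof (intro allI impI)
      fix a assume h: "1 \<le> a" "a \<le> Suc b" "Suc b < k"
      show "theta a \<le> theta (Suc b)"
      proof (cases "a = Suc b")
        case False
        then have "theta a \<le> theta b" using Suc h by auto
        also have "\<dots> \<le> theta (Suc b)" using mono[of b] h False by auto
        finally show ?thesis .
      qed simp
    qed
  qed
  have hasint: "(f has_integral (\<Sum>j\<in>{1..<m}. theta j * w j)) {0..P m}" if "m \<le> k" for m
    using that
  proof (induction m)
    case 0 then show ?case using P01 has_integral_refl(1)[of f 0] by simp
  next
    case (Suc m)
    show ?case
    proof (cases "m = 0")
      case True
      then show ?thesis using P01 has_integral_refl(1)[of f 0] by simp
    next
      case False
      have mr: "m \<in> {1..nH}" using False Suc.prems kr by auto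
      have le: "P m \<le> P (Suc m)" "0 \<le> P m" using Pmono[of m "Suc m"] Pmono[of 0 m] P01 mr by auto
      have cst: "((\<lambda>_. theta m) has_integral theta m * w m) {P m..P (Suc m)}"
        using has_integral_const_real[of "theta m" "P m" "P (Suc m)"] le Psuc[of m] mr by (auto simp: mult.commute)
      have piece: "(f has_integral theta m * w m) {P m..P (Suc m)}"
      proof (rule has_integral_spike_finite[of "{P (Suc m)}" _ _ "\<lambda>_. theta m"])
        fix x assume "x \<in> {P m..P (Suc m)} - {P (Suc m)}"
        then have "x \<in> window w m" unfolding window_eq by auto
        then show "f x = theta m" using rate mr by auto
      qed (use cst in simp_all)
      have "(f has_integral (\<Sum>j\<in>{1..<m}. theta j * w j) + theta m * w m) {0..P (Suc m)}"
        by (rule has_integral_combine[OF le(2) le(1)]) (use Suc piece in auto)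
      then show ?thesis using False by (simp add: sum.atLeastLessThan_Suc)
    qed
  qed
  have intW: "(f has_integral (\<Sum>j\<in>{1..<k}. theta j * w j)) {0..W}"
    unfolding W_def by (rule hasint) simp
  have tW: "0 \<le> t" "t \<le> W" using t unfolding W_def P_def by auto
  have sc: "u * W \<le> (\<Sum>j\<in>{1..<k}. theta j * w j)"
    using sum_cond unfolding u_def W_def P_def by simp
  have main: "f integrable_on {t..W} \<and> (W - t) * u \<le> integral {t..W} f"
  proof (cases "t = W")
    case True
    then show ?thesis using has_integral_refl(1)[of f W] by auto
  next
    case False
    then have tlt: "t < W" using tW by auto
    have iW: "f integrable_on {0..W}" using intW by auto
    have i1: "f integrable_on {0..t}" by (rule integrable_subinterval_real[OF iW]) (use tW in auto)
    have i2: "f integrable_on {t..W}" by (rule integrable_subinterval_real[OF iW]) (use tW in auto)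
    define A where "A = integral {0..t} f"
    define B where "B = integral {t..W} f"
    have "(f has_integral A + B) {0..W}"
      unfolding A_def B_def
      by (rule has_integral_combine) (use tW i1 i2 in auto)
    then have AB: "A + B = (\<Sum>j\<in>{1..<k}. theta j * w j)"
      using intW has_integral_unique by blast
    define m where "m = theta (idx t)"
    have it: "1 \<le> idx t" "idx t < k" "f t = m" using idx_props[of t] tW tlt m_def by auto
    have "A \<le> t * m"
    proof -
      have c: "((\<lambda>_. m) has_integral t * m) {0..t}"
        using has_integral_const_real[of m 0 t] tW by (simp add: mult.commute)
      show ?thesis
      proof (rule has_integral_le[OF _ c])
        show "(f has_integral A) {0..t}" unfolding A_def using i1 by auto
      next
        fix x assume x: "x \<in> {0..t}"
        then have "x < W" "0 \<le> x" using tlt by auto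
        then have "1 \<le> idx x" "f x = theta (idx x)" using idx_props by auto
        moreover have "idx x \<le> idx t" using idx_mono x tlt by auto
        ultimately show "f x \<le> m" using theta_mono[of "idx t"] it m_def by auto
      qed
    qed
    moreover have "(W - t) * m \<le> B"
    proof -
      define g where "g x = (if x = W then m else f x)" for x
      have c: "((\<lambda>_. m) has_integral (W - t) * m) {t..W}"
        using has_integral_const_real[of m t W] tW by (simp add: mult.commute)
      have gi: "(g has_integral B) {t..W}"
        unfolding B_def
        by (rule has_integral_spike_finite[of "{W}" _ _ f]) (use i2 g_def in auto)
      show ?thesis
      proof (rule has_integral_le[OF c gi])
        fix x assume x: "x \<in> {t..W}"
        show "m \<le> g x"
        proof (cases "x = W")
          case False
          then have "x < W" "0 \<le> x" "t \<le> x" using x tW by auto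
          then have "idx x < k" "f x = theta (idx x)" using idx_props by auto
          moreover have "idx t \<le> idx x" using idx_mono \<open>x < W\<close> \<open>t \<le> x\<close> tW by auto
          ultimately show ?thesis using theta_mono[of "idx x"] it m_def g_def False by auto
        qed (simp add: g_def)
      qed
    qed
    ultimately have h: "A \<le> t * m" "(W - t) * m \<le> B" by auto
    have h1: "t * ((W - t) * m) \<le> t * B" using h(2) tW by (intro mult_left_mono) auto
    have h2: "(W - t) * A \<le> (W - t) * (t * m)" using h(1) tlt by (intro mult_left_mono) auto
    have h3: "(W - t) * (u * W) \<le> (W - t) * (A + B)" using sc AB tlt by (intro mult_left_mono) auto
    have "W * ((W - t) * u) \<le> W * B"
    proof -
      have "W * ((W - t) * u) = (W - t) * (u * W)" by (simp add: algebra_simps)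
      also have "\<dots> \<le> (W - t) * A + (W - t) * B" using h3 by (simp add: algebra_simps)
      also have "\<dots> \<le> t * ((W - t) * m) + (W - t) * B" using h2 by (simp add: algebra_simps)
      also have "\<dots> \<le> t * B + (W - t) * B" using h1 by simp
      also have "\<dots> = W * B" by (simp add: algebra_simps)
      finally show ?thesis .
    qed
    then have "(W - t) * u \<le> B" using tW tlt by (simp add: mult_le_cancel_left)
    then show ?thesis using i2 B_def by auto
  qed
  show ?thesis using main unfolding f_def W_def P_def u_def .
qed

end
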